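(* Let $k\ge 2$ and let $\mathcal H$ be a 3-uniform linear hypergraph containing no Berge cycle of length $2k+1$. Let $\pi$ be a choice function on $\mathcal H$ and let $G_\pi$ be the graph with edge set $\{\pi(E): E\in\mathcal H,\ \pi(E)\ne\emptyset\}$. Let $T$ be a subtree (not necessarily spanning) of $G_\pi$, let $x\in V(T)$, and for $i\ge 0$ let $V_i$ be the set of vertices of $T$ at distance exactly $i$ from $x$ in $T$. Then for every $1\le i\le k$, the induced subgraph $G_\pi[V_i]$ contains no $\Theta$-graph of order $\ell$ for any $\ell\ge 2k$.
   Context: A hypergraph is linear if any two distinct hyperedges share at most one vertex. A Berge cycle of length $m$ is a family of $m$ distinct hyperedges $H_0,\dots,H_{m-1}$ for which there exist distinct vertices $v_0,\dots,v_{m-1}$ with $\{v_i,v_{i+1}\}\subset H_i$ (indices mod $m$). A choice function on $\mathcal H$ is a map $\pi$ assigning to each hyperedge $E$ either a 2-element subset $\pi(E)\subset E$ or $\emptyset$. A $\Theta$-graph of order $\ell$ ($\ell\ge4$) is a cycle of length $\ell$ together with one chord, on exactly $\ell$ vertices. *)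

theory Defs
  imports Main
begin

definition linear_hg :: "'a set set \<Rightarrow> bool" where
  "linear_hg H \<longleftrightarrow> (\<forall>E\<in>H. \<forall>F\<in>H. E \<noteq> F \<longrightarrow> card (E \<inter> F) \<le> 1)"

definition uniform3 :: "'a set set \<Rightarrow> bool" where
  "uniform3 H \<longleftrightarrow> (\<forall>E\<in>H. card E = 3)"

definition has_berge_cycle :: "'a set set \<Rightarrow> nat \<Rightarrow> bool" where
  "has_berge_cycle H m \<longleftrightarrow>
     (\<exists>Hs :: nat \<Rightarrow> 'a set. \<exists>v :: nat \<Rightarrow> 'a.
        inj_on Hs {..<m} \<and> Hs ` {..<m} \<subseteq> H \<and> inj_on v {..<m} \<and>
        (\<forall>i<m. {v i, v (Suc i mod m)} \<subseteq> Hs i))"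

definition choice_fun :: "'a set set \<Rightarrow> ('a set \<Rightarrow> 'a set) \<Rightarrow> bool" where
  "choice_fun H \<pi> \<longleftrightarrow> (\<forall>E\<in>H. (\<pi> E \<subseteq> E \<and> card (\<pi> E) = 2) \<or> \<pi> E = {})"

definition G_pi :: "'a set set \<Rightarrow> ('a set \<Rightarrow> 'a set) \<Rightarrow> 'a set set" where
  "G_pi H \<pi> = {\<pi> E | E. E \<in> H \<and> \<pi> E \<noteq> {}}"

definition is_walk :: "'a set set \<Rightarrow> 'a list \<Rightarrow> bool" where
  "is_walk Ed xs \<longleftrightarrow> xs \<noteq> [] \<and> (\<forall>j. Suc j < length xs \<longrightarrow> {xs ! j, xs ! Suc j} \<in> Ed)"

definition graph_connected :: "'a set \<Rightarrow> 'a set set \<Rightarrow> bool" where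
  "graph_connected V Ed \<longleftrightarrow>
     (\<forall>u\<in>V. \<forall>w\<in>V. \<exists>xs. is_walk Ed xs \<and> hd xs = u \<and> last xs = w)"

definition has_cycle :: "'a set set \<Rightarrow> bool" where
  "has_cycle Ed \<longleftrightarrow> (\<exists>m\<ge>3. \<exists>f :: nat \<Rightarrow> 'a.
      inj_on f {..<m} \<and> (\<forall>j<m. {f j, f (Suc j mod m)} \<in> Ed))"

definition is_subtree :: "'a set \<Rightarrow> 'a set set \<Rightarrow> 'a set \<Rightarrow> 'a set set \<Rightarrow> bool" where
  "is_subtree VT ET VG EG \<longleftrightarrow>
     VT \<noteq> {} \<and> finite VT \<and> VT \<subseteq> VG \<and> ET \<subseteq> EG \<and>
     (\<forall>e\<in>ET. \<exists>u v. e = {u, v} \<and> u \<noteq> v \<and> u \<in> VT \<and> v \<in> VT) \<and>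
     graph_connected VT ET \<and> \<not> has_cycle ET"

definition tree_dist :: "'a set set \<Rightarrow> 'a \<Rightarrow> 'a \<Rightarrow> nat" where
  "tree_dist ET x v = (LEAST n. \<exists>xs. is_walk ET xs \<and> hd xs = x \<and> last xs = v \<and> length xs = Suc n)"

text \<open>Theta-graph of order l (as a subgraph, not necessarily induced) of the graph with
  vertex set S and edges Ed \<inter> Pow S: a cycle on l distinct vertices of S plus one chord.\<close>
definition has_theta :: "'a set \<Rightarrow> 'a set set \<Rightarrow> nat \<Rightarrow> bool" where
  "has_theta S Ed l \<longleftrightarrow> 4 \<le> l \<and> (\<exists>f :: nat \<Rightarrow> 'a. \<exists>a b.
      inj_on f {..<l} \<and> f ` {..<l} \<subseteq> S \<and>
      (\<forall>j<l. {f j, f (Suc j mod l)} \<in> Ed) \<and>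
      a < l \<and> b < l \<and> a \<noteq> b \<and> b \<noteq> Suc a mod l \<and> a \<noteq> Suc b mod l \<and>
      {f a, f b} \<in> Ed)"

definition induced_edges :: "'a set set \<Rightarrow> 'a set \<Rightarrow> 'a set set" where
  "induced_edges Ed S = {e \<in> Ed. e \<subseteq> S}"

end

theory Submission
  imports Defs
begin


definition per :: "(int \<Rightarrow> bool) \<Rightarrow> int \<Rightarrow> bool" where
  "per col d \<longleftrightarrow> (\<forall>z. col (z + d) = col z)"

lemma per_neg: "per col d \<Longrightarrow> per col (-d)"
  unfolding per_def by (metis add.commute add_uminus_conv_diff diff_add_cancel)

lemma per_add: "per col d \<Longrightarrow> per col e \<Longrightarrow> per col (d + e)"
  unfolding per_def by (metis add.assoc)

lemma per_nat_mult: "per col d \<Longrightarrow> per col (int n * d)"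
proof (induction n)
  case 0 then show ?case by (simp add: per_def)
next
  case (Suc n)
  then have "per col (int n * d + d)" using per_add by blast
  then show ?case by (simp add: algebra_simps)
qed

lemma per_mult: "per col d \<Longrightarrow> per col (n * d)"
proof (cases "n \<ge> 0")
  case True
  assume "per col d"
  then have "per col (int (nat n) * d)" by (rule per_nat_mult)
  with True show ?thesis by simp
next
  case False
  assume "per col d"
  then have "per col (int (nat (-n)) * d)" by (rule per_nat_mult)
  then have "per col (- (int (nat (-n)) * d))" by (rule per_neg)
  with False show ?thesis by simp
qed

lemma per_app: "per col d \<Longrightarrow> col (z + d) = col z"
  unfolding per_def by blast

lemma refl_ext:
  assumes P: "per col P" "P > 0"
    and R: "\<And>y. lo \<le> y \<Longrightarrow> y < lo + P \<Longrightarrow> col y = col (\<sigma> - y)"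
  shows "col y = col (\<sigma> - y)"
proof -
  define y' where "y' = lo + (y - lo) mod P"
  have yy: "y = y' + ((y - lo) div P) * P" unfolding y'_def
    by (metis add.commute add.left_commute diff_add_cancel mod_div_mult_eq)
  have r: "lo \<le> y'" "y' < lo + P" unfolding y'_def using P(2) by auto
  have pm: "per col (((y - lo) div P) * P)" using per_mult P(1) by blast
  have "col y = col y'" using per_app[OF pm, of y'] yy by simp
  also have "\<dots> = col (\<sigma> - y')" using R r by blast
  also have "\<dots> = col (\<sigma> - y)"
  proof -
    have pm2: "per col (-(((y - lo) div P) * P))" using per_neg pm by blast
    have "\<sigma> - y = (\<sigma> - y') + (-(((y - lo) div P) * P))" using yy by simp
    then show ?thesis using per_app[OF pm2, of "\<sigma> - y'"] by (metis uminus_add_conv_diff)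
  qed
  finally show ?thesis .
qed

lemma trans_ext:
  assumes P: "per col P" "P > 0"
    and R: "\<And>y. lo \<le> y \<Longrightarrow> y < lo + P \<Longrightarrow> col y = col (y + \<delta>)"
  shows "per col \<delta>"
  unfolding per_def
proof
  fix y
  define y' where "y' = lo + (y - lo) mod P"
  have yy: "y = y' + ((y - lo) div P) * P" unfolding y'_def
    by (metis add.commute add.left_commute diff_add_cancel mod_div_mult_eq)
  have r: "lo \<le> y'" "y' < lo + P" unfolding y'_def using P(2) by auto
  have pm: "per col (((y - lo) div P) * P)" using per_mult P(1) by blast
  have "col y = col y'" using per_app[OF pm, of y'] yy by simp
  also have "\<dots> = col (y' + \<delta>)" using R r by blast
  also have "\<dots> = col (y + \<delta>)"
    using per_app[OF pm, of "y' + \<delta>"] yy by (simp add: algebra_simps)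
  finally show "col (y + \<delta>) = col y" by simp
qed

lemma two_refl: "(\<And>y. col y = col (\<sigma> - y)) \<Longrightarrow> (\<And>y. col y = col (\<sigma>' - y)) \<Longrightarrow> per col (\<sigma>' - \<sigma>)"
  unfolding per_def by (metis add_diff_cancel_left' diff_diff_eq2 diff_add_cancel)

lemma final:
  assumes "per col 2" "per col L" "odd L" and "col z \<noteq> col w"
  shows False
proof -
  obtain m where m: "L = 2 * m + 1" using assms(3) by (metis oddE)
  have "per col (L + (-m) * 2)" using per_add[OF assms(2) per_mult[OF assms(1)]] by blast
  then have p1: "per col 1" using m by (simp add: algebra_simps)
  have "col z = col 0" using per_app[OF per_mult[OF p1, of z], of 0] by simp
  moreover have "col w = col 0" using per_app[OF per_mult[OF p1, of w], of 0] by simp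
  ultimately show False using assms(4) by simp
qed

lemma core:
  fixes col :: "int \<Rightarrow> bool" and l L t :: int
  assumes pl: "per col l" and pL: "per col L" and oL: "odd L" and L1: "1 \<le> L" and Ll: "L \<le> l - 1"
    and t2: "2 \<le> t" and tl: "t \<le> l - 2"
    and ii: "\<And>p. 0 \<le> p \<Longrightarrow> p \<le> t-1 \<Longrightarrow> 0 \<le> L-1-p \<Longrightarrow> L-1-p \<le> l-t-1 \<Longrightarrow> col p = col (t + (L-1-p))"
    and iii: "\<And>p. 0 \<le> p \<Longrightarrow> p \<le> l-t-1 \<Longrightarrow> 0 \<le> L-1-p \<Longrightarrow> L-1-p \<le> t-1 \<Longrightarrow> col (-p) = col (t - (L-1-p))"
    and iv: "L \<le> t \<Longrightarrow> (\<And>p. 0 \<le> p \<Longrightarrow> p \<le> L-1 \<Longrightarrow> col p = col (t - (L-1-p)))"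
    and v: "L \<le> l - t \<Longrightarrow> (\<And>p. 0 \<le> p \<Longrightarrow> p \<le> L-1 \<Longrightarrow> col (-p) = col (t + (L-1-p)))"
    and ne: "col z \<noteq> col w"
  shows False
proof -
  have Lsh: "\<And>y. col (y - L) = col y" using per_app[OF pL] by (metis diff_add_cancel)
  have lsh: "\<And>y. col (y - l) = col y" using per_app[OF pl] by (metis diff_add_cancel)
  consider (A) "L \<le> t" "L \<le> l - t" | (B) "L > t" "L \<le> l - t" | (C) "L \<le> t" "L > l - t"
    | (D) "L > t" "L > l - t" by linarith
  then have "per col 2"
  proof cases
    case A
    have p1: "per col (t+1)"
    proof (rule trans_ext[OF pL])
      show "L > 0" using L1 by simp
      fix y assume "0 \<le> y" "y < 0 + L"
      then have "col y = col (t - (L-1-y))" using iv[OF A(1)] by simp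
      also have "\<dots> = col (y + (t+1))" using Lsh[of "y + (t+1)"] by (simp add: algebra_simps)
      finally show "col y = col (y + (t+1))" .
    qed
    have p2: "per col (t-1)"
    proof (rule trans_ext[OF pL])
      show "L > 0" using L1 by simp
      fix y assume "-(L-1) \<le> y" "y < -(L-1) + L"
      then have "col (-(-y)) = col (t + (L-1-(-y)))" using v[OF A(2), of "-y"] by simp
      also have "\<dots> = col (y + (t-1))" using per_app[OF pL, of "y + (t-1)"] by (simp add: algebra_simps)
      finally show "col y = col (y + (t-1))" by simp
    qed
    have "per col ((t+1) + (-(t-1)))" using per_add[OF p1 per_neg[OF p2]] .
    then show ?thesis by simp
  next
    case B
    have p2: "per col (t-1)"
    proof (rule trans_ext[OF pL])
      show "L > 0" using L1 by simp
      fix y assume "-(L-1) \<le> y" "y < -(L-1) + L"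
      then have "col (-(-y)) = col (t + (L-1-(-y)))" using v[OF B(2), of "-y"] by simp
      also have "\<dots> = col (y + (t-1))" using per_app[OF pL, of "y + (t-1)"] by (simp add: algebra_simps)
      finally show "col y = col (y + (t-1))" by simp
    qed
    have r1: "col y = col ((t-1) - y)" for y
    proof (rule refl_ext[OF p2])
      show "t - 1 > 0" using t2 by simp
      fix y assume "0 \<le> y" "y < 0 + (t-1)"
      then have "col y = col (t + (L-1-y))" using ii B by simp
      also have "\<dots> = col ((t-1) - y)" using Lsh[of "t + (L-1-y)"] by (simp add: algebra_simps)
      finally show "col y = col ((t-1) - y)" .
    qed
    have r2: "col y = col ((t+1) - y)" for y
    proof (rule refl_ext[OF p2])
      show "t - 1 > 0" using t2 by simp
      fix y assume "1 \<le> y" "y < 1 + (t-1)"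
      then have "col (-(L - y)) = col (t - (L-1-(L - y)))" using iii[of "L - y"] B by simp
      also have "\<dots> = col ((t+1) - y)" by (simp add: algebra_simps)
      finally have "col (-(L - y)) = col ((t+1) - y)" .
      moreover have "col (-(L-y)) = col y" using Lsh[of y] by simp
      ultimately show "col y = col ((t+1) - y)" by simp
    qed
    show ?thesis using two_refl[OF r1 r2] by simp
  next
    case C
    have p1: "per col (t+1)"
    proof (rule trans_ext[OF pL])
      show "L > 0" using L1 by simp
      fix y assume "0 \<le> y" "y < 0 + L"
      then have "col y = col (t - (L-1-y))" using iv[OF C(1)] by simp
      also have "\<dots> = col (y + (t+1))" using Lsh[of "y + (t+1)"] by (simp add: algebra_simps)
      finally show "col y = col (y + (t+1))" .
    qed
    have p3: "per col (l - t - 1)"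
    proof -
      have "per col (l + (-(t+1)))" using per_add[OF pl per_neg[OF p1]] .
      moreover have "l + (-(t+1)) = l - t - 1" by simp
      ultimately show ?thesis by metis
    qed
    have r1: "col y = col (-2 - y)" for y
    proof (rule refl_ext[OF p3])
      show "l - t - 1 > 0" using tl by simp
      fix y assume "-1 \<le> y" "y < -1 + (l-t-1)"
      then have "col (L-1-(y+1)) = col (t + (L-1-(L-1-(y+1))))" using ii[of "L-1-(y+1)"] C by simp
      moreover have "col (L-1-(y+1)) = col (-2 - y)" using per_app[OF pL, of "-2-y"] by (simp add: algebra_simps)
      moreover have "col (t + (L-1-(L-1-(y+1)))) = col y" using per_app[OF p1, of y] by (simp add: algebra_simps)
      ultimately show "col y = col (-2 - y)" by simp
    qed
    have r2: "col y = col (0 - y)" for y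
    proof (rule refl_ext[OF p3])
      show "l - t - 1 > 0" using tl by simp
      fix y assume "0 \<le> y" "y < 0 + (l-t-1)"
      then have "col (-y) = col (t - (L-1-y))" using iii[of y] C by simp
      moreover have "col (t - (L-1-y)) = col y" using Lsh[of "y + (t+1)"] per_app[OF p1, of y] by (simp add: algebra_simps)
      ultimately show "col y = col (0 - y)" by simp
    qed
    show ?thesis using two_refl[OF r1 r2] by simp
  next
    case D
    have p3: "per col (l - L)"
    proof -
      have "per col (l + (-L))" using per_add[OF pl per_neg[OF pL]] .
      then show ?thesis by simp
    qed
    have r1: "col y = col ((t-1) - y)" for y
    proof (rule refl_ext[OF p3])
      show "l - L > 0" using Ll by simp
      fix y assume "L - (l-t) \<le> y" "y < L - (l-t) + (l - L)"
      then have "col y = col (t + (L-1-y))" using ii D by simp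
      also have "\<dots> = col ((t-1) - y)" using Lsh[of "t + (L-1-y)"] by (simp add: algebra_simps)
      finally show "col y = col ((t-1) - y)" .
    qed
    have r2: "col y = col ((t+1) - y)" for y
    proof (rule refl_ext[OF p3])
      show "l - L > 0" using Ll by simp
      fix y assume "L - (l-t) + 1 \<le> y" "y < L - (l-t) + 1 + (l - L)"
      then have "col (-(L - y)) = col (t - (L-1-(L - y)))" using iii[of "L - y"] D by simp
      also have "\<dots> = col ((t+1) - y)" by (simp add: algebra_simps)
      finally have "col (-(L - y)) = col ((t+1) - y)" .
      moreover have "col (-(L-y)) = col y" using Lsh[of y] by simp
      ultimately show "col y = col ((t+1) - y)" by simp
    qed
    show ?thesis using two_refl[OF r1 r2] by simp
  qed
  then show False using final[OF _ pL oL ne] by blast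
qed



lemma nz_mod:
  fixes d n e :: int assumes "0 < d" "d < n" "e = 1 \<or> e = -1" shows "(e * d) mod n \<noteq> 0"
proof -
  have "\<not> n dvd d" using zdvd_not_zless assms by auto
  then show ?thesis using assms(3) by (auto simp: dvd_eq_mod_eq_0[symmetric])
qed

lemma theta_path:
  fixes f :: "nat \<Rightarrow> 'a" and Ed :: "'a set set" and c :: "'a \<Rightarrow> bool" and l a b L u w :: nat
  assumes l4: "4 \<le> l" and inj: "inj_on f {..<l}" and cyc: "\<forall>j<l. {f j, f (Suc j mod l)} \<in> Ed"
    and al: "a < l" and bl: "b < l" and ab: "a \<noteq> b" and ab1: "b \<noteq> Suc a mod l" and ab2: "a \<noteq> Suc b mod l"
    and ch: "{f a, f b} \<in> Ed"
    and oL: "odd L" and L1: "1 \<le> L" and Ll: "L < l"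
    and ul: "u < l" and wl: "w < l" and cuw: "c (f u) \<noteq> c (f w)"
  shows "\<exists>g. inj_on g {..L} \<and> (\<forall>j<L. {g j, g (Suc j)} \<in> Ed) \<and> g ` {..L} \<subseteq> f ` {..<l} \<and> c (g 0) \<noteq> c (g L)"
proof (rule ccontr)
  assume nex: "\<not> ?thesis"
  define li where "li = int l"
  define G where "G z = f (nat ((int a + z) mod li))" for z
  define col where "col z = c (G z)" for z
  define t where "t = (int b - int a) mod li"
  have lipos: "li > 0" using l4 li_def by simp
  have Gin: "G z \<in> f ` {..<l}" for z
  proof -
    have "nat ((int a + z) mod li) < l" using lipos li_def by (simp add: nat_less_iff)
    then show ?thesis unfolding G_def by blast
  qed
  have Gmod: "z mod li = w' mod li" if "G z = G w'" for z w'
  proof -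
    have n1: "nat ((int a + z) mod li) < l" "nat ((int a + w') mod li) < l"
      using lipos li_def by (simp_all add: nat_less_iff)
    then have "nat ((int a + z) mod li) = nat ((int a + w') mod li)"
      using inj that unfolding G_def inj_on_def by blast
    then have "(int a + z) mod li = (int a + w') mod li" using lipos by (simp add: eq_nat_nat_iff)
    then have "li dvd (int a + z) - (int a + w')" by (simp add: mod_eq_dvd_iff)
    then show ?thesis by (simp add: mod_eq_dvd_iff)
  qed
  have Gedge: "{G z, G (z+1)} \<in> Ed" for z
  proof -
    define j where "j = nat ((int a + z) mod li)"
    have jl: "j < l" using lipos li_def j_def by (simp add: nat_less_iff)
    have "int (Suc j mod l) = (int j + 1) mod li" using li_def by (simp add: zmod_int add.commute)
    also have "\<dots> = ((int a + z) mod li + 1) mod li" using j_def lipos by simp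
    also have "\<dots> = (int a + (z + 1)) mod li" by (simp add: mod_add_left_eq add.assoc)
    finally have "Suc j mod l = nat ((int a + (z+1)) mod li)" by (metis nat_int)
    then show ?thesis using cyc jl unfolding G_def j_def by metis
  qed
  have G0: "G 0 = f a" unfolding G_def li_def using al by (simp add: zmod_int)
  have Gt: "G t = f b"
  proof -
    have "(int a + t) mod li = int b" unfolding t_def li_def using bl
      by (simp add: mod_add_right_eq)
    then show ?thesis unfolding G_def by simp
  qed
  have t2: "2 \<le> t" and tl: "t \<le> li - 2"
  proof -
    have t0: "0 \<le> t" "t < li" unfolding t_def using lipos by simp_all
    have "t \<noteq> 0"
    proof
      assume "t = 0" then have "G 0 = G t" by simp
      then have "f a = f b" using G0 Gt by simp
      then show False using inj al bl ab unfolding inj_on_def by blast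
    qed
    moreover have "t \<noteq> 1"
    proof
      assume "t = 1" then have "G 1 = f b" using Gt by simp
      moreover have "G 1 = f (Suc a mod l)" unfolding G_def li_def
        by (metis Suc_eq_plus1 nat_int of_nat_1 of_nat_add zmod_int)
      ultimately have "f b = f (Suc a mod l)" by simp
      then show False using inj bl ab1 l4 unfolding inj_on_def by auto
    qed
    moreover have "t \<noteq> li - 1"
    proof
      assume tt: "t = li - 1"
      have "G (t + 1) = G 0" unfolding G_def using tt by simp
      moreover have "G (t+1) = f (Suc b mod l)"
      proof -
        have "(int a + (t + 1)) mod li = (int a + t + 1) mod li" by (simp add: add.assoc)
        also have "\<dots> = ((int a + t) mod li + 1) mod li" by (simp add: mod_add_left_eq)
        also have "\<dots> = (int b + 1) mod li" using Gt unfolding t_def li_def using bl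
          by (simp add: mod_add_right_eq)
        also have "\<dots> = int (Suc b mod l)" unfolding li_def by (simp add: zmod_int add.commute)
        finally show ?thesis unfolding G_def by simp
      qed
      ultimately have "f (Suc b mod l) = f a" using G0 by simp
      then show False using inj al ab2 l4 unfolding inj_on_def by auto
    qed
    ultimately show "2 \<le> t" "t \<le> li - 2" using t0 by auto
  qed
  have allp: "c (g 0) = c (g L)" if "inj_on g {..L}" "\<forall>j<L. {g j, g (Suc j)} \<in> Ed" "g ` {..L} \<subseteq> f ` {..<l}" for g
    using nex that by blast
  have hp: "col (h 0) = col (h L)"
    if st: "\<forall>j<L. h (Suc j) = h j + 1 \<or> h j = h (Suc j) + 1 \<or> (h j = 0 \<and> h (Suc j) = t)"
      and dj: "\<forall>j j'. j < j' \<longrightarrow> j' \<le> L \<longrightarrow> (h j' - h j) mod li \<noteq> 0" for h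
  proof -
    define g where "g j = G (h j)" for j
    have "inj_on g {..L}"
    proof (rule inj_onI)
      fix j j' assume "j \<in> {..L}" "j' \<in> {..L}" "g j = g j'"
      then have jj: "j \<le> L" "j' \<le> L" "h j mod li = h j' mod li" using Gmod[of "h j" "h j'"] g_def by auto
      show "j = j'"
      proof (rule ccontr)
        assume "j \<noteq> j'"
        then consider "j < j'" | "j' < j" by linarith
        then show False
        proof cases
          case 1
          have "(h j' - h j) mod li = 0" using jj(3)[symmetric] by (simp add: mod_eq_dvd_iff)
          then show False using dj[rule_format, OF 1 jj(2)] by simp
        next
          case 2
          have "(h j - h j') mod li = 0" using jj(3) by (simp add: mod_eq_dvd_iff)
          then show False using dj[rule_format, OF 2 jj(1)] by simp
        qed
      qed
    qed
    moreover have "\<forall>j<L. {g j, g (Suc j)} \<in> Ed"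
    proof (intro allI impI)
      fix j assume "j < L"
      then consider "h (Suc j) = h j + 1" | "h j = h (Suc j) + 1" | "h j = 0 \<and> h (Suc j) = t" using st by blast
      then show "{g j, g (Suc j)} \<in> Ed"
      proof cases
        case 1 then show ?thesis using Gedge[of "h j"] g_def by simp
      next
        case 2 then show ?thesis using Gedge[of "h (Suc j)"] g_def by (simp add: insert_commute)
      next
        case 3 then show ?thesis using ch G0 Gt g_def by simp
      qed
    qed
    moreover have "g ` {..L} \<subseteq> f ` {..<l}" using Gin g_def by auto
    ultimately have "c (g 0) = c (g L)" using allp by blast
    then show ?thesis using g_def col_def by simp
  qed
  have arc: "col s = col (s + int L)" for s
  proof -
    have "col ((\<lambda>j. s + int j) 0) = col ((\<lambda>j. s + int j) L)"
    proof (rule hp)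
      show "\<forall>j<L. s + int (Suc j) = s + int j + 1 \<or> s + int j = s + int (Suc j) + 1 \<or> (s + int j = 0 \<and> s + int (Suc j) = t)"
        by simp
      show "\<forall>j j'. j < j' \<longrightarrow> j' \<le> L \<longrightarrow> (s + int j' - (s + int j)) mod li \<noteq> 0"
      proof (intro allI impI)
        fix j j' :: nat assume "j < j'" "j' \<le> L"
        then have "0 < int j' - int j" "int j' - int j < li" using Ll li_def by auto
        then show "(s + int j' - (s + int j)) mod li \<noteq> 0" by simp
      qed
    qed
    then show ?thesis by simp
  qed
  have chp: "col (e1 * int p) = col (t + e2 * (int L - 1 - int p))"
    if e1: "e1 = 1 \<or> e1 = -1" and e2: "e2 = 1 \<or> e2 = -1" and pL: "p < L"
      and dis: "\<And>x y. 0 \<le> x \<Longrightarrow> x \<le> int p \<Longrightarrow> 0 \<le> y \<Longrightarrow> y \<le> int L - 1 - int p \<Longrightarrow>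
                 0 < t + e2 * y - e1 * x \<and> t + e2 * y - e1 * x < li" for e1 e2 :: int and p
  proof -
    define h where "h j = (if j \<le> p then e1 * (int p - int j) else t + e2 * (int j - int p - 1))" for j
    have "col (h 0) = col (h L)"
    proof (rule hp)
      show "\<forall>j<L. h (Suc j) = h j + 1 \<or> h j = h (Suc j) + 1 \<or> (h j = 0 \<and> h (Suc j) = t)"
      proof (intro allI impI)
        fix j assume "j < L"
        consider "j < p" | "j = p" | "j > p" by linarith
        then show "h (Suc j) = h j + 1 \<or> h j = h (Suc j) + 1 \<or> (h j = 0 \<and> h (Suc j) = t)"
        proof cases
          case 1 then show ?thesis using e1 unfolding h_def by (auto simp: algebra_simps)
        next
          case 2 then show ?thesis unfolding h_def by simp
        next
          case 3 then show ?thesis using e2 unfolding h_def by (auto simp: algebra_simps)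
        qed
      qed
      show "\<forall>j j'. j < j' \<longrightarrow> j' \<le> L \<longrightarrow> (h j' - h j) mod li \<noteq> 0"
      proof (intro allI impI)
        fix j j' :: nat assume jj: "j < j'" "j' \<le> L"
        consider "j' \<le> p" | "j \<le> p" "p < j'" | "p < j" by linarith
        then show "(h j' - h j) mod li \<noteq> 0"
        proof cases
          case 1
          then have "h j' - h j = (- e1) * (int j' - int j)" unfolding h_def using jj by (simp add: algebra_simps)
          moreover have "0 < int j' - int j" "int j' - int j < li" using jj Ll li_def by auto
          moreover have "-e1 = 1 \<or> -e1 = -1" using e1 by auto
          ultimately show ?thesis using nz_mod by metis
        next
          case 2
          then have "h j' - h j = t + e2 * (int j' - int p - 1) - e1 * (int p - int j)"
            unfolding h_def by simp
          moreover have "0 < t + e2 * (int j' - int p - 1) - e1 * (int p - int j) \<and>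
              t + e2 * (int j' - int p - 1) - e1 * (int p - int j) < li"
            using dis[of "int p - int j" "int j' - int p - 1"] 2 jj by simp
          ultimately show ?thesis by simp
        next
          case 3
          then have "h j' - h j = e2 * (int j' - int j)" unfolding h_def using jj by (simp add: algebra_simps)
          moreover have "0 < int j' - int j" "int j' - int j < li" using jj Ll li_def by auto
          ultimately show ?thesis using e2 nz_mod by metis
        qed
      qed
    qed
    moreover have "h 0 = e1 * int p" "h L = t + e2 * (int L - 1 - int p)" unfolding h_def using pL by auto
    ultimately show ?thesis by simp
  qed
  define Li where "Li = int L"
  have "False"
  proof (rule core[of col li Li t])
    show "per col li"
    proof -
      have "col (z + li) = col z" for z unfolding col_def G_def by (simp add: add.assoc[symmetric])
      then show ?thesis unfolding per_def by blast
    qed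
    show "per col Li" unfolding per_def Li_def using arc by simp
    show "odd Li" using oL Li_def by simp
    show "1 \<le> Li" "Li \<le> li - 1" using L1 Ll Li_def li_def by auto
    show "2 \<le> t" "t \<le> li - 2" using t2 tl by auto
    show "col p = col (t + (Li - 1 - p))" if "0 \<le> p" "p \<le> t-1" "0 \<le> Li-1-p" "Li-1-p \<le> li-t-1" for p
    proof -
      have "col (1 * int (nat p)) = col (t + 1 * (int L - 1 - int (nat p)))"
        by (rule chp) (use that Li_def t2 tl in auto)
      then show ?thesis using that Li_def by (simp add: algebra_simps)
    qed
    show "col (-p) = col (t - (Li - 1 - p))" if "0 \<le> p" "p \<le> li-t-1" "0 \<le> Li-1-p" "Li-1-p \<le> t-1" for p
    proof -
      have "col ((-1) * int (nat p)) = col (t + (-1) * (int L - 1 - int (nat p)))"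
        by (rule chp) (use that Li_def t2 tl in auto)
      then show ?thesis using that Li_def by (simp add: algebra_simps)
    qed
    show "col p = col (t - (Li - 1 - p))" if "Li \<le> t" "0 \<le> p" "p \<le> Li-1" for p
    proof -
      have "col (1 * int (nat p)) = col (t + (-1) * (int L - 1 - int (nat p)))"
        by (rule chp) (use that Li_def t2 tl in auto)
      then show ?thesis using that Li_def by (simp add: algebra_simps)
    qed
    show "col (-p) = col (t + (Li - 1 - p))" if "Li \<le> li - t" "0 \<le> p" "p \<le> Li-1" for p
    proof -
      have "col ((-1) * int (nat p)) = col (t + 1 * (int L - 1 - int (nat p)))"
        by (rule chp) (use that Li_def t2 tl in auto)
      then show ?thesis using that Li_def by (simp add: algebra_simps)
    qed
    have "col (int u - int a) = c (f u)" unfolding col_def G_def li_def using ul by (simp add: zmod_int)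
    moreover have "col (int w - int a) = c (f w)" unfolding col_def G_def li_def using wl by (simp add: zmod_int)
    ultimately show "col (int u - int a) \<noteq> col (int w - int a)" using cuw by simp
  qed
  then show False .
qed



lemma td_le:
  assumes "is_walk ET xs" "hd xs = x" "last xs = v"
  shows "tree_dist ET x v \<le> length xs - 1"
proof -
  have "length xs = Suc (length xs - 1)" using assms(1) unfolding is_walk_def by simp
  then have "\<exists>ys. is_walk ET ys \<and> hd ys = x \<and> last ys = v \<and> length ys = Suc (length xs - 1)"
    using assms by metis
  then show ?thesis unfolding tree_dist_def by (rule Least_le)
qed

lemma td_walk:
  assumes "graph_connected VT ET" "x \<in> VT" "v \<in> VT"
  shows "\<exists>xs. is_walk ET xs \<and> hd xs = x \<and> last xs = v \<and> length xs = Suc (tree_dist ET x v)"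
proof -
  obtain xs where xs: "is_walk ET xs" "hd xs = x" "last xs = v"
    using assms unfolding graph_connected_def by blast
  have "length xs = Suc (length xs - 1)" using xs(1) unfolding is_walk_def by simp
  then have "\<exists>ys. is_walk ET ys \<and> hd ys = x \<and> last ys = v \<and> length ys = Suc (length xs - 1)"
    using xs by metis
  then show ?thesis unfolding tree_dist_def by (rule LeastI)
qed

lemma td0:
  assumes "graph_connected VT ET" "x \<in> VT" "v \<in> VT" "tree_dist ET x v = 0"
  shows "v = x"
proof -
  obtain xs where xs: "is_walk ET xs" "hd xs = x" "last xs = v" "length xs = Suc 0"
    using td_walk[OF assms(1-3)] assms(4) by auto
  then obtain y where "xs = [y]" by (metis length_0_conv length_Suc_conv)
  then show ?thesis using xs by simp
qed

lemma td_par: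
  assumes con: "graph_connected VT ET" and xV: "x \<in> VT" and vV: "v \<in> VT"
    and ed: "\<forall>e\<in>ET. \<exists>u v. e = {u, v} \<and> u \<noteq> v \<and> u \<in> VT \<and> v \<in> VT"
    and dv: "tree_dist ET x v = Suc n"
  shows "\<exists>p. p \<in> VT \<and> {p, v} \<in> ET \<and> tree_dist ET x p = n"
proof -
  obtain xs where xs: "is_walk ET xs" "hd xs = x" "last xs = v" "length xs = Suc (Suc n)"
    using td_walk[OF con xV vV] dv by auto
  define p where "p = xs ! n"
  have lv: "xs ! Suc n = v"
  proof -
    have "xs \<noteq> []" using xs(4) by auto
    then have "last xs = xs ! (length xs - 1)" by (rule last_conv_nth)
    then show ?thesis using xs(3,4) by simp
  qed
  have e: "{p, v} \<in> ET" using xs(1,4) lv unfolding is_walk_def p_def by force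
  have pV: "p \<in> VT"
  proof -
    obtain u' v' where "{p, v} = {u', v'}" "u' \<in> VT" "v' \<in> VT" using ed e by blast
    then show ?thesis by (metis doubleton_eq_iff)
  qed
  have le: "tree_dist ET x p \<le> n"
  proof -
    define ys where "ys = take (Suc n) xs"
    have "is_walk ET ys" using xs(1,4) unfolding is_walk_def ys_def by auto
    moreover have "hd ys = x" using xs(2,4) unfolding ys_def by (simp add: hd_take)
    moreover have "last ys = p" using xs(4) unfolding ys_def p_def by (subst last_conv_nth) auto
    moreover have "length ys = Suc n" using xs(4) ys_def by simp
    ultimately show ?thesis using td_le by fastforce
  qed
  have ge: "n \<le> tree_dist ET x p"
  proof -
    obtain zs where zs: "is_walk ET zs" "hd zs = x" "last zs = p" "length zs = Suc (tree_dist ET x p)"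
      using td_walk[OF con xV pV] by blast
    have "is_walk ET (zs @ [v])"
      unfolding is_walk_def
    proof (intro conjI allI impI)
      show "zs @ [v] \<noteq> []" by simp
      fix j assume j: "Suc j < length (zs @ [v])"
      show "{(zs @ [v]) ! j, (zs @ [v]) ! Suc j} \<in> ET"
      proof (cases "Suc j < length zs")
        case True then show ?thesis using zs(1) unfolding is_walk_def by (simp add: nth_append)
      next
        case False
        then have "j = length zs - 1" "Suc j = length zs" using j by auto
        moreover have "last zs = zs ! (length zs - 1)" using zs(4) by (subst last_conv_nth) auto
        ultimately have "(zs @ [v]) ! j = p" "(zs @ [v]) ! Suc j = v" using zs(3,4)
          by (auto simp: nth_append)
        then show ?thesis using e by simp
      qed
    qed
    moreover have "hd (zs @ [v]) = x" using zs(2,4) by (cases zs) auto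
    ultimately have "tree_dist ET x v \<le> length (zs @ [v]) - 1" using td_le by fastforce
    then show ?thesis using dv zs(4) by simp
  qed
  show ?thesis using pV e le ge by (intro exI[of _ p]) auto
qed

lemma it_par:
  assumes hp: "\<forall>v\<in>VT. d v > 0 \<longrightarrow> par v \<in> VT \<and> {par v, v} \<in> ET \<and> d (par v) = d v - 1"
    and vV: "v \<in> VT"
  shows "n \<le> d v \<Longrightarrow> (par ^^ n) v \<in> VT \<and> d ((par ^^ n) v) = d v - n"
proof (induction n)
  case 0 then show ?case using vV by simp
next
  case (Suc n)
  then have IH: "(par ^^ n) v \<in> VT" "d ((par ^^ n) v) = d v - n" by auto
  then have "d ((par ^^ n) v) > 0" using Suc.prems by simp
  then show ?case using hp IH by simp
qed

lemma it_edge: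
  assumes hp: "\<forall>v\<in>VT. d v > 0 \<longrightarrow> par v \<in> VT \<and> {par v, v} \<in> ET \<and> d (par v) = d v - 1"
    and vV: "v \<in> VT" and n: "n < d v"
  shows "{(par ^^ Suc n) v, (par ^^ n) v} \<in> ET"
proof -
  have "(par ^^ n) v \<in> VT" "d ((par ^^ n) v) = d v - n" using it_par[OF hp vV] n by auto
  then show ?thesis using hp n by simp
qed



lemma mod_two_ne:
  assumes "n < m" "5 \<le> m" shows "Suc (Suc n mod m) mod m \<noteq> n"
proof -
  have "Suc (Suc n mod m) mod m = (n + 2) mod m" by (simp add: mod_Suc_eq)
  moreover have "(n + 2) mod m \<noteq> n"
  proof (cases "n + 2 < m")
    case True then show ?thesis by simp
  next
    case False
    then have "(n + 2) mod m = n + 2 - m" using assms by (simp add: mod_if)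
    then show ?thesis using assms False by simp
  qed
  ultimately show ?thesis by simp
qed

theorem lemma5p2:
  fixes H :: "'a set set" and \<pi> :: "'a set \<Rightarrow> 'a set" and k :: nat
    and VT :: "'a set" and ET :: "'a set set" and x :: 'a
  assumes "k \<ge> 2"
    and "finite H" and "uniform3 H" and "linear_hg H"
    and "\<not> has_berge_cycle H (2 * k + 1)"
    and "choice_fun H \<pi>"
    and "is_subtree VT ET (\<Union>H) (G_pi H \<pi>)"
    and "x \<in> VT"
  shows "\<forall>i. 1 \<le> i \<and> i \<le> k \<longrightarrow>
           (\<forall>l\<ge>2 * k. \<not> has_theta {v \<in> VT. tree_dist ET x v = i}
                               (induced_edges (G_pi H \<pi>) {v \<in> VT. tree_dist ET x v = i}) l)"
proof (intro allI impI notI)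
  fix i l
  assume hi: "1 \<le> i \<and> i \<le> k" and hl: "2 * k \<le> l"
    and th: "has_theta {v \<in> VT. tree_dist ET x v = i} (induced_edges (G_pi H \<pi>) {v \<in> VT. tree_dist ET x v = i}) l"
  note sub = assms(7) and xV = assms(8) and nob = assms(5) and chf = assms(6) and k2 = assms(1)
  define d where "d = tree_dist ET x"
  define Vi where "Vi = {v \<in> VT. d v = i}"
  define Ed where "Ed = induced_edges (G_pi H \<pi>) Vi"
  define EG where "EG = G_pi H \<pi>"
  have th': "has_theta Vi Ed l" using th unfolding Vi_def Ed_def d_def .
  have con: "graph_connected VT ET" and ed: "\<forall>e\<in>ET. \<exists>u v. e = {u, v} \<and> u \<noteq> v \<and> u \<in> VT \<and> v \<in> VT"
    and ETG: "ET \<subseteq> EG"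
    using sub unfolding is_subtree_def EG_def by auto
  have EdG: "Ed \<subseteq> EG" unfolding Ed_def EG_def induced_edges_def by auto
  have hex: "\<exists>p. p \<in> VT \<and> {p, v} \<in> ET \<and> d p = d v - 1" if "v \<in> VT" "d v > 0" for v
  proof -
    have "d v = Suc (d v - 1)" using that by simp
    then show ?thesis using td_par[OF con xV that(1) ed, of "d v - 1"] d_def by metis
  qed
  define par where "par v = (SOME p. p \<in> VT \<and> {p, v} \<in> ET \<and> d p = d v - 1)" for v
  have hp: "\<forall>v\<in>VT. d v > 0 \<longrightarrow> par v \<in> VT \<and> {par v, v} \<in> ET \<and> d (par v) = d v - 1"
  proof (intro ballI impI)
    fix v assume "v \<in> VT" "d v > 0"
    then show "par v \<in> VT \<and> {par v, v} \<in> ET \<and> d (par v) = d v - 1"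
      unfolding par_def using someI_ex[OF hex] by blast
  qed
  define anc where "anc v j = (par ^^ (d v - j)) v" for v j
  have ancV: "anc v j \<in> VT \<and> d (anc v j) = j" if "v \<in> VT" "j \<le> d v" for v j
    using it_par[OF hp that(1), of "d v - j"] that unfolding anc_def by auto
  have anc_top: "anc v (d v) = v" for v unfolding anc_def by simp
  have anc0: "anc v 0 = x" if "v \<in> VT" for v
    using td0[OF con xV, of "anc v 0"] ancV[OF that, of 0] d_def by auto
  have akey: "anc z j' = (par ^^ (j - j')) (anc z j)" if "j' \<le> j" "j \<le> d z" for z j j'
  proof -
    have "d z - j' = (j - j') + (d z - j)" using that by simp
    then show ?thesis unfolding anc_def by (simp add: funpow_add)
  qed
  have anc_down: "anc v j' = anc w j'"
    if "v \<in> VT" "w \<in> VT" "d v = d w" "j' \<le> j" "j \<le> d v" "anc v j = anc w j" for v w j j'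
    using akey[of j' j v] akey[of j' j w] that by simp
  have anc_edge: "{anc v j, anc v (Suc j)} \<in> ET" if "v \<in> VT" "j < d v" for v j
  proof -
    have "d v - j = Suc (d v - Suc j)" using that by simp
    then show ?thesis using it_edge[OF hp that(1), of "d v - Suc j"] that unfolding anc_def by simp
  qed
  obtain f a b where l4: "4 \<le> l" and finj: "inj_on f {..<l}" and fS: "f ` {..<l} \<subseteq> Vi"
    and cyc: "\<forall>j<l. {f j, f (Suc j mod l)} \<in> Ed" and al: "a < l" and bl: "b < l" and ab: "a \<noteq> b"
    and ab1: "b \<noteq> Suc a mod l" and ab2: "a \<noteq> Suc b mod l" and ch: "{f a, f b} \<in> Ed"
    using th' unfolding has_theta_def by blast
  have fV: "f j \<in> VT" "d (f j) = i" if "j < l" for j using fS that unfolding Vi_def by auto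
  define J where "J = {j. j \<le> i \<and> (\<forall>u<l. \<forall>w<l. anc (f u) j = anc (f w) j)}"
  have finJ: "finite J" unfolding J_def by simp
  have J0: "0 \<in> J" unfolding J_def using anc0 fV by simp
  define js where "js = Max J"
  have jsJ: "js \<in> J" using finJ J0 unfolding js_def by (intro Max_in) auto
  have jsmax: "j \<le> js" if "j \<in> J" for j using finJ that unfolding js_def by simp
  have iJ: "i \<notin> J"
  proof
    assume "i \<in> J"
    then have "anc (f 0) i = anc (f 1) i" using l4 unfolding J_def by auto
    moreover have "anc (f 0) i = f 0" using anc_top[of "f 0"] fV(2)[of 0] l4 by simp
    moreover have "anc (f 1) i = f 1" using anc_top[of "f 1"] fV(2)[of 1] l4 by simp
    ultimately have "f 0 = f 1" by simp
    moreover have "(0::nat) \<in> {..<l}" "(1::nat) \<in> {..<l}" using l4 by auto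
    ultimately show False using finj inj_onD by fastforce
  qed
  have jsi: "js < i" using jsJ iJ unfolding J_def by (metis (mono_tags, lifting) le_neq_implies_less mem_Collect_eq)
  have "Suc js \<notin> J" using jsmax by fastforce
  then obtain u0 w0 where u0: "u0 < l" and w0: "w0 < l" and uw0: "anc (f u0) (Suc js) \<noteq> anc (f w0) (Suc js)"
    using jsi unfolding J_def by auto
  define c where "c z = (anc z (Suc js) = anc (f u0) (Suc js))" for z
  have cne: "c (f u0) \<noteq> c (f w0)" unfolding c_def using uw0 by auto
  define D where "D = i - js"
  have D1: "1 \<le> D" "D \<le> i" "D \<le> k" using jsi hi unfolding D_def by auto
  define L where "L = 2 * (k - D) + 1"
  have oL: "odd L" unfolding L_def by simp
  have Ll: "L < l" using D1 hl unfolding L_def by simp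
  obtain g where ginj: "inj_on g {..L}" and gE: "\<forall>j<L. {g j, g (Suc j)} \<in> Ed"
    and gS: "g ` {..L} \<subseteq> f ` {..<l}" and cg: "c (g 0) \<noteq> c (g L)"
    using theta_path[OF l4 finj cyc al bl ab ab1 ab2 ch oL _ Ll u0 w0 cne] unfolding L_def by auto
  have gV: "g n \<in> VT" "d (g n) = i" if "n \<le> L" for n using gS fV that by auto
  define u where "u = g 0"
  define w where "w = g L"
  have uV: "u \<in> VT" "d u = i" and wV: "w \<in> VT" "d w = i" using gV unfolding u_def w_def by auto
  have uw_js: "anc u js = anc w js"
  proof -
    have "g 0 \<in> f ` {..<l}" "g L \<in> f ` {..<l}" using gS by auto
    then obtain u' w' where uw': "u' < l" "w' < l" "u = f u'" "w = f w'" unfolding u_def w_def by blast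
    have "\<forall>u<l. \<forall>w<l. anc (f u) js = anc (f w) js" using jsJ unfolding J_def by blast
    then have "anc (f u') js = anc (f w') js" using uw'(1,2) by blast
    then show ?thesis using uw'(3,4) by simp
  qed
  have sep: "anc u j' \<noteq> anc w j'" if "js < j'" "j' \<le> i" for j'
  proof
    assume "anc u j' = anc w j'"
    then have "anc u (Suc js) = anc w (Suc js)" using anc_down[OF uV(1) wV(1), of "Suc js" j'] uV wV that by simp
    then show False using cg unfolding c_def u_def w_def by simp
  qed
  define m where "m = 2 * k + 1"
  have mLD: "m = L + 2 * D" unfolding m_def L_def using D1 by simp
  define v where "v n = (if n \<le> L then g n else if n \<le> L + D then anc w (i - (n - L)) else anc u (js + (n - L - D)))" for n
  have vedge: "{v n, v (Suc n mod m)} \<in> EG" if "n < m" for n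
  proof -
    consider "n < L" | "L \<le> n" "n < L + D" | "L + D \<le> n" by linarith
    then show ?thesis
    proof cases
      case 1
      then have "Suc n mod m = Suc n" using mLD D1 by simp
      moreover have "{g n, g (Suc n)} \<in> Ed" using gE 1 by simp
      moreover have "v n = g n" "v (Suc n) = g (Suc n)" using 1 unfolding v_def by auto
      ultimately show ?thesis using EdG by auto
    next
      case 2
      have sm: "Suc n mod m = Suc n" using 2 mLD D1 by simp
      have vn: "v n = anc w (Suc (i - Suc (n - L)))"
      proof (cases "n = L")
        case True
        then have "v n = g L" unfolding v_def by simp
        also have "g L = anc w i" using anc_top[of w] wV(2) unfolding w_def by simp
        finally show ?thesis using True D1 2 by simp
      next
        case False then show ?thesis unfolding v_def using 2 D1 by (simp add: Suc_diff_Suc)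
      qed
      have vs: "v (Suc n) = anc w (i - Suc (n - L))" unfolding v_def using 2 by (simp add: Suc_diff_le)
      have "{anc w (i - Suc (n - L)), anc w (Suc (i - Suc (n - L)))} \<in> ET"
        by (rule anc_edge[OF wV(1)]) (use wV 2 D1 in simp)
      moreover have "{anc w (i - Suc (n - L)), anc w (Suc (i - Suc (n - L)))} = {v n, v (Suc n mod m)}"
        using sm vn vs by (simp add: insert_commute)
      ultimately show ?thesis using ETG by auto
    next
      case 3
      have nm: "n - L - D < D" using 3 that mLD by simp
      have vn: "v n = anc u (js + (n - L - D))"
      proof (cases "n = L + D")
        case True
        then have "v n = anc w (i - D)" unfolding v_def using D1 by simp
        also have "i - D = js" using D_def jsi by simp
        finally show ?thesis using uw_js True by simp
      next
        case False then show ?thesis unfolding v_def using 3 by simp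
      qed
      have vs: "v (Suc n mod m) = anc u (Suc (js + (n - L - D)))"
      proof (cases "Suc n = m")
        case True
        then have "Suc (js + (n - L - D)) = i" using mLD D_def jsi 3 by simp
        then show ?thesis using True anc_top[of u] uV unfolding v_def u_def by simp
      next
        case False
        then have "Suc n mod m = Suc n" using that by simp
        then show ?thesis unfolding v_def using 3 by (simp add: Suc_diff_le)
      qed
      have "{anc u (js + (n - L - D)), anc u (Suc (js + (n - L - D)))} \<in> ET"
        by (rule anc_edge[OF uV(1)]) (use uV nm D_def jsi in simp)
      then show ?thesis using vn vs ETG by auto
    qed
  qed
  have dv1: "d (v n) = i" if "n \<le> L" for n using gV that unfolding v_def by simp
  have dv2: "v n = anc w (i - (n - L)) \<and> d (v n) = i - (n - L) \<and> i - (n - L) < i \<and> js \<le> i - (n - L)"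
    if "L < n" "n \<le> L + D" for n
    using that ancV[OF wV(1), of "i - (n - L)"] wV D_def jsi unfolding v_def by auto
  have dv3: "v n = anc u (js + (n - L - D)) \<and> d (v n) = js + (n - L - D) \<and> js + (n - L - D) < i \<and> js < js + (n - L - D)"
    if "L + D < n" "n < m" for n
    using that ancV[OF uV(1), of "js + (n - L - D)"] uV D_def jsi mLD unfolding v_def by auto
  have vne: "v n1 \<noteq> v n2" if "n1 < n2" "n2 < m" for n1 n2
  proof
    assume eq: "v n1 = v n2"
    consider "n2 \<le> L" | "L < n2" "n2 \<le> L + D" | "L + D < n2" by linarith
    then show False
    proof cases
      case 1
      then have "g n1 = g n2" using eq that unfolding v_def by simp
      then show False using ginj 1 that unfolding inj_on_def by auto
    next
      case 2
      show False
      proof (cases "n1 \<le> L")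
        case True
        have "d (v n1) = d (v n2)" using eq by simp
        then show False using dv1[OF True] dv2[OF 2] by linarith
      next
        case False
        have p1: "L < n1" "n1 \<le> L + D" using False that 2 by auto
        have "d (v n1) = d (v n2)" using eq by simp
        moreover have "d (v n1) = i - (n1 - L)" using dv2[OF p1] by blast
        moreover have "d (v n2) = i - (n2 - L)" using dv2[OF 2] by blast
        ultimately have "i - (n1 - L) = i - (n2 - L)" by simp
        then show False using that p1 2 D1 by simp
      qed
    next
      case 3
      consider "n1 \<le> L" | "L < n1" "n1 \<le> L + D" | "L + D < n1" by linarith
      then show False
      proof cases
        case 1
        have "d (v n1) = d (v n2)" using eq by simp
        then show False using dv1[OF 1] dv3[OF 3 that(2)] by linarith
      next
        case 2
        define j' where "j' = js + (n2 - L - D)"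
        have a1: "v n1 = anc w (i - (n1 - L))" "d (v n1) = i - (n1 - L)" using dv2[OF 2] by blast+
        have a2: "v n2 = anc u j'" "d (v n2) = j'" "j' < i" "js < j'" using dv3[OF 3 that(2)] j'_def by blast+
        have "i - (n1 - L) = j'" using a1 a2 eq by simp
        then have "anc w j' = anc u j'" using a1 a2 eq by simp
        then show False using sep[of j'] a2 by simp
      next
        case 4: 3
        have p1: "n1 < m" using that by simp
        have "d (v n1) = d (v n2)" using eq by simp
        moreover have "d (v n1) = js + (n1 - L - D)" using dv3[OF 4 p1] by blast
        moreover have "d (v n2) = js + (n2 - L - D)" using dv3[OF 3 that(2)] by blast
        ultimately have "js + (n1 - L - D) = js + (n2 - L - D)" by simp
        then show False using that 4 by simp
      qed
    qed
  qed
  have vinj: "inj_on v {..<m}"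
  proof (rule inj_onI)
    fix n1 n2 assume "n1 \<in> {..<m}" "n2 \<in> {..<m}" "v n1 = v n2"
    then show "n1 = n2" using vne[of n1 n2] vne[of n2 n1] by (metis lessThan_iff linorder_neqE_nat)
  qed
  define Hs where "Hs n = (SOME E. E \<in> H \<and> \<pi> E \<noteq> {} \<and> \<pi> E = {v n, v (Suc n mod m)})" for n
  have Hs: "Hs n \<in> H \<and> \<pi> (Hs n) \<noteq> {} \<and> \<pi> (Hs n) = {v n, v (Suc n mod m)}" if "n < m" for n
  proof -
    have "\<exists>E. E \<in> H \<and> \<pi> E \<noteq> {} \<and> \<pi> E = {v n, v (Suc n mod m)}"
      using vedge[OF that] unfolding EG_def G_pi_def by auto
    then show ?thesis unfolding Hs_def by (rule someI_ex)
  qed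
  have m5: "5 \<le> m" using k2 m_def by simp
  have "has_berge_cycle H m"
    unfolding has_berge_cycle_def
  proof (intro exI conjI)
    show "inj_on Hs {..<m}"
    proof (rule inj_onI)
      fix n1 n2 assume n: "n1 \<in> {..<m}" "n2 \<in> {..<m}" "Hs n1 = Hs n2"
      then have n': "n1 < m" "n2 < m" by auto
      have s: "Suc n1 mod m < m" "Suc n2 mod m < m" using m5 by auto
      have "{v n1, v (Suc n1 mod m)} = {v n2, v (Suc n2 mod m)}" using Hs[OF n'(1)] Hs[OF n'(2)] n(3) by simp
      then consider "v n1 = v n2" | "v n1 = v (Suc n2 mod m)" "v (Suc n1 mod m) = v n2"
        by (metis doubleton_eq_iff)
      then show "n1 = n2"
      proof cases
        case 1 then show ?thesis using vinj n' unfolding inj_on_def by blast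
      next
        case 2
        then have "n1 = Suc n2 mod m" "Suc n1 mod m = n2" using vinj n' s unfolding inj_on_def by blast+
        then have "Suc (Suc n2 mod m) mod m = n2" by simp
        then show ?thesis using mod_two_ne[OF n'(2) m5] by simp
      qed
    qed
    show "Hs ` {..<m} \<subseteq> H" using Hs by auto
    show "inj_on v {..<m}" by (rule vinj)
    show "\<forall>n<m. {v n, v (Suc n mod m)} \<subseteq> Hs n"
    proof (intro allI impI)
      fix n assume n: "n < m"
      have "\<pi> (Hs n) \<subseteq> Hs n" using chf Hs[OF n] unfolding choice_fun_def by auto
      then show "{v n, v (Suc n mod m)} \<subseteq> Hs n" using Hs[OF n] by simp
    qed
  qed
  then show False using nob m_def by simp
qed


end
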